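(* Let $\Omega_{1/2}=\{s\in\mathbb{C}:\operatorname{Re}(s)>\tfrac12\}\setminus[\tfrac12,1]$. The following are equivalent: (1) The Riemann hypothesis holds, i.e. $\zeta(s)\neq 0$ for all $s$ with $\operatorname{Re}(s)>\tfrac12$. (2) For every integer $i\ge 1$, the function $\zeta_i(s)$ has a meromorphic continuation to $\Omega_{1/2}$. (3) For every integer $i\ge 1$, the function $\zeta_i(s)$ has an analytic continuation to $\Omega_{1/2}$. (4) For all $i$ in some infinite subset of $\mathbb{N}^*$, the function $\zeta_i(s)$ has an analytic continuation to $\Omega_{1/2}$.
   Context: Let $p_1=2<p_2=3<p_3=5<\dots$ be the prime numbers in increasing order, $\mathbb{P}=\{p_n:n\ge1\}$. For an integer $k\ge1$ let $M_k=\{p_1,p_{k+1},p_{2k+1},p_{3k+1},\dots\}=\{p_{1+jk}:j\ge0\}$ and, for $\operatorname{Re}(s)>1$, $\zeta_k(s)=\prod_{p\in M_k}(1-p^{-s})^{-1}$ (so $\zeta_1=\zeta$). "Has an analytic (resp. meromorphic) continuation to $\Omega_{1/2}$" means there is an analytic (resp. meromorphic) function on $\Omega_{1/2}$ agreeing with $\zeta_i$ on $\{\operatorname{Re}(s)>1\}$. *)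

theory Defs
  imports "HOL-Complex_Analysis.Complex_Analysis" "HOL-Library.Infinite_Set"
begin

text \<open>p_{n+1} = nth_prime n, i.e. nth_prime 0 = 2, nth_prime 1 = 3, ... (0-indexed).\<close>
definition nth_prime :: "nat \<Rightarrow> nat" where
  "nth_prime n = enumerate {p. prime p} n"

text \<open>M_k = {p_{1+jk} : j \<ge> 0}; with 0-indexing p_{1+jk} = nth_prime (j*k).\<close>
definition M :: "nat \<Rightarrow> nat set" where
  "M k = {nth_prime (j * k) | j. True}"

text \<open>zeta_k(s) = prod_{j \<ge> 0} (1 - p_{1+jk}^{-s})^{-1}, meant for Re s > 1.\<close>
definition zeta_k :: "nat \<Rightarrow> complex \<Rightarrow> complex" where
  "zeta_k k s = (\<Prod>j. inverse (1 - of_nat (nth_prime (j * k)) powr (- s)))"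

definition Omega_half :: "complex set" where
  "Omega_half = {s. Re s > 1/2} - complex_of_real ` {1/2..1}"

text \<open>Riemann hypothesis: the Riemann zeta function (the analytic continuation of
  sum_{n\<ge>1} n^{-s} from Re s > 1 to Re s > 1/2, s \<noteq> 1) has no zeros in Re s > 1/2.
  Since {Re s > 1/2} - {1} is connected, the continuation is unique.\<close>
definition RH :: bool where
  "RH \<longleftrightarrow> (\<exists>f. f holomorphic_on ({s. Re s > 1/2} - {1}) \<and>
      (\<forall>s. Re s > 1 \<longrightarrow> f s = (\<Sum>n. 1 / of_nat (Suc n) powr s)) \<and>
      (\<forall>s. Re s > 1/2 \<and> s \<noteq> 1 \<longrightarrow> f s \<noteq> 0))"

definition has_meromorphic_cont :: "(complex \<Rightarrow> complex) \<Rightarrow> complex set \<Rightarrow> bool" where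
  "has_meromorphic_cont h A \<longleftrightarrow> (\<exists>g. g meromorphic_on A \<and> (\<forall>s. Re s > 1 \<longrightarrow> g s = h s))"

definition has_analytic_cont :: "(complex \<Rightarrow> complex) \<Rightarrow> complex set \<Rightarrow> bool" where
  "has_analytic_cont h A \<longleftrightarrow> (\<exists>g. g analytic_on A \<and> (\<forall>s. Re s > 1 \<longrightarrow> g s = h s))"

end

theory Submission
  imports Defs
begin


lemma inf_primes: "infinite {p::nat. prime p}"
  using primes_infinite by simp

lemma np_prime: "prime (nth_prime n)"
  unfolding nth_prime_def using enumerate_in_set[OF inf_primes] by auto

lemma np_mono: "strict_mono nth_prime"
  unfolding nth_prime_def[abs_def] using strict_mono_enumerate[OF inf_primes] by simp

lemma np_less_iff: "nth_prime m < nth_prime n \<longleftrightarrow> m < n"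
  using np_mono by (simp add: strict_mono_less)

lemma np_le_iff: "nth_prime m \<le> nth_prime n \<longleftrightarrow> m \<le> n"
  using np_mono by (simp add: strict_mono_less_eq)

lemma np_inj: "nth_prime m = nth_prime n \<longleftrightarrow> m = n"
  using np_mono strict_mono_eq by auto

lemma np_ge: "nth_prime n \<ge> n + 2"
proof (induction n)
  case 0 then show ?case using prime_ge_2_nat[OF np_prime[of 0]] by simp
next
  case (Suc n)
  have "nth_prime n < nth_prime (Suc n)" using np_less_iff by simp
  then show ?case using Suc by simp
qed

lemma np_pos: "nth_prime n > 0"
  using np_ge[of n] by simp

lemma prime_is_np: assumes "prime p" obtains j where "p = nth_prime j"
proof -
  have "p \<in> range nth_prime"
    unfolding nth_prime_def[abs_def] using range_enumerate[OF inf_primes] assms by auto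
  then show ?thesis using that by auto
qed

lemma gmvt:
  fixes f :: "real \<Rightarrow> complex"
  assumes ab: "a \<le> b"
    and fd: "\<And>x. x \<in> {a..b} \<Longrightarrow> (f has_vector_derivative f' x) (at x within {a..b})"
    and gd: "\<And>x. x \<in> {a..b} \<Longrightarrow> (g has_real_derivative g' x) (at x within {a..b})"
    and bd: "\<And>x. x \<in> {a..b} \<Longrightarrow> norm (f' x) \<le> g' x"
  shows "norm (f b - f a) \<le> g b - g a"
proof -
  have i1: "(f' has_integral (f b - f a)) {a..b}"
    by (rule fundamental_theorem_of_calculus[OF ab fd])
  have i2: "(g' has_integral (g b - g a)) {a..b}"
    by (rule fundamental_theorem_of_calculus[OF ab]) (use gd in \<open>auto simp: has_real_derivative_iff_has_vector_derivative\<close>)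
  have "norm (integral {a..b} f') \<le> integral {a..b} g'"
    by (rule integral_norm_bound_integral) (use i1 i2 bd in auto)
  then show ?thesis using i1 i2 by (simp add: integral_unique)
qed

definition ee :: "complex \<Rightarrow> real \<Rightarrow> complex" where
  "ee s u = exp (- s * of_real u)"

lemma norm_ee: "norm (ee s u) = exp (- Re s * u)"
  by (simp add: ee_def norm_exp_eq_Re)

lemma powr_ee: "n > 0 \<Longrightarrow> (of_nat n :: complex) powr (-s) = ee s (ln (real n))"
  by (simp add: ee_def powr_def)

lemma ee_ne1: assumes "Re s > 0" "u > 0" shows "norm (ee s u) < 1"
  using assms by (simp add: norm_ee)

lemma ee_34: assumes "Re s \<ge> 1/2" "u \<ge> ln 2" shows "norm (ee s u) \<le> 3/4"
proof -
  have "Re s * u \<ge> (1/2) * ln 2"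
    using assms by (intro mult_mono) auto
  then have "exp (- Re s * u) \<le> exp (-(ln 2)/2)" by simp
  moreover have "exp (-(ln (2::real))/2) \<le> 3/4"
  proof -
    have "exp (-(ln (2::real))/2)^2 = exp (2 * (-(ln (2::real))/2))" by (simp only: exp_double[symmetric])
    also have "\<dots> = 1/2" by (simp add: exp_minus)
    finally have e2: "exp (-(ln (2::real))/2)^2 = 1/2" .
    show ?thesis by (rule power2_le_imp_le, subst e2) (simp_all add: power2_eq_square)
  qed
  ultimately have "exp (- Re s * u) \<le> 3/4" by linarith
  then show ?thesis by (simp add: norm_ee)
qed

definition phi :: "complex \<Rightarrow> real \<Rightarrow> complex" where
  "phi s u = - Ln (1 - ee s u)"

lemma Re_1m_pos: "norm (w::complex) < 1 \<Longrightarrow> Re (1 - w) > 0"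
  using abs_Re_le_cmod[of w] by auto

lemma not_nonpos_1m: "norm (w::complex) < 1 \<Longrightarrow> 1 - w \<notin> \<real>\<^sub>\<le>\<^sub>0"
  by (metis Re_1m_pos nonpos_Reals_cases Re_complex_of_real not_le)

lemma phi_deriv:
  assumes "Re s > 0" "u > 0"
  shows "((\<lambda>u. phi s u) has_vector_derivative (- s * ee s u / (1 - ee s u))) (at u)"
proof -
  have nn: "1 - exp (- s * of_real u) \<notin> \<real>\<^sub>\<le>\<^sub>0"
    using not_nonpos_1m[OF ee_ne1[OF assms]] by (simp add: ee_def)
  have "((\<lambda>z. - Ln (1 - exp (- s * z))) has_field_derivative
          (- ((- (exp (- s * of_real u) * (- s))) / (1 - exp (- s * of_real u))))) (at (of_real u))"
    by (rule derivative_eq_intros refl nn | simp | simp only: divide_inverse_commute)+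
  then have "((\<lambda>z. - Ln (1 - exp (- s * z))) has_field_derivative
          (- s * ee s u / (1 - ee s u))) (at (of_real u))"
    by (simp add: ee_def mult.commute)
  from field_vector_diff_chain_at[OF has_vector_derivative_of_real[OF DERIV_ident] this]
  show ?thesis by (simp add: o_def phi_def ee_def)
qed

lemma phi_deriv_bound:
  assumes "Re s \<ge> a" "a \<ge> 1/2" "norm s \<le> R" "ln 2 \<le> x"
  shows "norm (- s * ee s x / (1 - ee s x)) \<le> 4 * R * exp (- a * x)"
proof -
  have e34: "norm (ee s x) \<le> 3/4" using ee_34[of s x] assms by auto
  have d: "norm (1 - ee s x) \<ge> 1/4"
    using norm_triangle_ineq2[of 1 "ee s x"] e34 by simp
  have l2: "ln (2::real) > 0" by simp
  have x0: "x > 0" using assms(4) l2 by linarith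
  have "exp (- Re s * x) \<le> exp (- a * x)" using assms(1) x0 by (simp add: mult_right_mono)
  then have en: "norm (ee s x) \<le> exp (- a * x)" by (simp add: norm_ee)
  have "norm (- s * ee s x / (1 - ee s x)) = norm s * norm (ee s x) / norm (1 - ee s x)"
    by (simp add: norm_mult norm_divide)
  also have "\<dots> \<le> R * exp (- a * x) / (1/4)"
  proof -
    have R0: "0 \<le> R" using assms(3) norm_ge_zero[of s] by linarith
    show ?thesis using d en assms(3) R0 by (intro frac_le mult_mono) auto
  qed
  finally show ?thesis by simp
qed

lemma phi_diff:
  assumes "Re s \<ge> a" "a \<ge> 1/2" "norm s \<le> R" "ln 2 \<le> u1" "u1 \<le> u2"
  shows "norm (phi s u2 - phi s u1) \<le> 4 * R / a * (exp (- a * u1) - exp (- a * u2))"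
proof -
  have a0: "a > 0" using assms by simp
  have "norm (phi s u2 - phi s u1) \<le> (- (4*R/a) * exp (- a * u2)) - (- (4*R/a) * exp (- a * u1))"
  proof (rule gmvt[where f' = "\<lambda>x. - s * ee s x / (1 - ee s x)" and g' = "\<lambda>x. 4 * R * exp (- a * x)"])
    fix x assume x: "x \<in> {u1..u2}"
    have l2: "ln (2::real) > 0" by simp
    have "u1 \<le> x" using x by simp
    then have x0: "x > 0" "ln 2 \<le> x" using assms(4) l2 by linarith+
    have "Re s > 0" using assms by simp
    then show "(phi s has_vector_derivative - s * ee s x / (1 - ee s x)) (at x within {u1..u2})"
      using phi_deriv[of s x] x0 by (simp add: has_vector_derivative_at_within)
    show "((\<lambda>x. - (4 * R / a) * exp (- a * x)) has_real_derivative 4 * R * exp (- a * x)) (at x within {u1..u2})"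
      using a0 by (auto intro!: derivative_eq_intros)
    show "norm (- s * ee s x / (1 - ee s x)) \<le> 4 * R * exp (- a * x)"
      using phi_deriv_bound[of a s R x] assms x0 by auto
  qed (use assms in auto)
  then show ?thesis by (simp add: algebra_simps)
qed



lemma holo_series:
  fixes f :: "nat \<Rightarrow> complex \<Rightarrow> complex"
  assumes S: "open S" and hol: "\<And>n. f n holomorphic_on S"
    and loc: "\<And>x. x \<in> S \<Longrightarrow> \<exists>d>0. cball x d \<subseteq> S \<and> (\<exists>M. summable M \<and> (\<forall>n. \<forall>y\<in>cball x d. norm (f n y) \<le> M n))"
  shows "(\<lambda>s. \<Sum>n. f n s) holomorphic_on S"
proof (rule holomorphic_uniform_sequence[OF S, where f = "\<lambda>N s. \<Sum>n<N. f n s"])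
  show "(\<lambda>s. \<Sum>n<N. f n s) holomorphic_on S" for N
    by (rule holomorphic_on_sum) (rule hol)
next
  fix x assume "x \<in> S"
  from loc[OF this] obtain d M where d0: "d > 0" "cball x d \<subseteq> S" "summable M"
    and Mb: "\<forall>n. \<forall>y\<in>cball x d. norm (f n y) \<le> M n" by blast
  from Mb have Mb': "\<And>n y. y \<in> cball x d \<Longrightarrow> norm (f n y) \<le> M n" by blast
  note d = d0 Mb'
  have "uniform_limit (cball x d) (\<lambda>N s. \<Sum>n<N. f n s) (\<lambda>s. \<Sum>n. f n s) sequentially"
    by (rule Weierstrass_m_test[OF d(4) d(3)])
  then show "\<exists>d>0. cball x d \<subseteq> S \<and> uniform_limit (cball x d) (\<lambda>N s. \<Sum>n<N. f n s) (\<lambda>s. \<Sum>n. f n s) sequentially"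
    using d(1,2) by (intro exI[of _ d] conjI)
qed

lemma series_summable_loc:
  fixes f :: "nat \<Rightarrow> complex \<Rightarrow> complex"
  assumes "x \<in> S"
    and loc: "\<And>x. x \<in> S \<Longrightarrow> \<exists>d>0. cball x d \<subseteq> S \<and> (\<exists>M. summable M \<and> (\<forall>n. \<forall>y\<in>cball x d. norm (f n y) \<le> M n))"
  shows "summable (\<lambda>n. f n x)"
proof -
  from loc[OF assms(1)] obtain d M where d0: "d > 0" "summable M"
    and Mb: "\<forall>n. \<forall>y\<in>cball x d. norm (f n y) \<le> M n" by blast
  from Mb have Mb': "\<And>n y. y \<in> cball x d \<Longrightarrow> norm (f n y) \<le> M n" by blast
  note d = d0 Mb'
  show ?thesis
    by (rule summable_comparison_test'[OF d(2)]) (use d in auto)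
qed

definition q :: "nat \<Rightarrow> real" where "q n = ln (real (nth_prime n))"

lemma q_ge: "q n \<ge> ln 2"
  unfolding q_def using np_ge[of n] by simp

lemma q_mono: "m \<le> n \<Longrightarrow> q m \<le> q n"
  unfolding q_def using np_le_iff[of m n] np_pos[of m] by simp

lemma exp_q: "exp (- a * q n) = real (nth_prime n) powr (- a)"
  unfolding q_def using np_pos[of n] by (simp add: powr_def)

lemma exp_q_le: "a \<ge> 0 \<Longrightarrow> exp (- a * q n) \<le> real (Suc n) powr (- a)"
  unfolding exp_q using np_ge[of n] by (intro powr_mono2') auto

lemma exp_q_lim: assumes "a > 0" shows "(\<lambda>n. exp (- a * q n)) \<longlonglongrightarrow> 0"
proof -
  have "(\<lambda>n. real (Suc n) powr (- a)) \<longlonglongrightarrow> 0"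
    using LIMSEQ_Suc[OF tendsto_neg_powr[OF _ filterlim_real_sequentially, of "- a"]] assms by simp
  then show ?thesis
    by (rule Lim_null_comparison[rotated]) (use exp_q_le assms in auto)
qed

lemma ee_q: "ee s (q n) = of_nat (nth_prime n) powr (- s)"
  unfolding q_def using powr_ee[OF np_pos[of n], of s] by simp

lemma phi_small:
  assumes "Re s \<ge> a" "a > 1"
  shows "norm (phi s (q n)) \<le> 2 * real (Suc n) powr (- a)"
proof -
  have l2: "ln (2::real) > 0" by simp
  have "Re s * q n \<ge> a * ln 2"
    using assms q_ge[of n] l2 by (intro mult_mono) auto
  moreover have "ln 2 < a * ln (2::real)" using assms(2) l2 by simp
  ultimately have "Re s * q n > ln 2" by linarith
  then have "exp (- Re s * q n) < exp (- ln 2)" by simp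
  then have small: "norm (ee s (q n)) < 1/2" by (simp add: norm_ee exp_minus)
  have "norm (phi s (q n)) = norm (Ln (1 + (- ee s (q n))))" by (simp add: phi_def)
  also have "\<dots> \<le> 2 * norm (- ee s (q n))" by (rule norm_Ln_le) (use small in simp)
  also have "\<dots> = 2 * exp (- Re s * q n)" by (simp add: norm_ee)
  also have "\<dots> \<le> 2 * exp (- a * q n)"
  proof -
    have "q n \<ge> 0" using q_ge[of n] l2 by linarith
    then have "a * q n \<le> Re s * q n" using assms(1) by (rule mult_right_mono[rotated])
    then have "- Re s * q n \<le> - a * q n" by linarith
    then show ?thesis by (intro mult_left_mono) auto
  qed
  also have "\<dots> \<le> 2 * real (Suc n) powr (- a)"
    by (intro mult_left_mono exp_q_le) (use assms in auto)
  finally show ?thesis .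
qed



lemma phi_holo: assumes "u > 0" shows "(\<lambda>s. phi s u) holomorphic_on {s. Re s > 0}"
proof -
  have "(\<lambda>s. - Ln (1 - exp (- s * of_real u))) holomorphic_on {s. Re s > 0}"
  proof (intro holomorphic_intros)
    fix s assume "s \<in> {s. Re s > 0}"
    then show "1 - exp (- s * of_real u) \<notin> \<real>\<^sub>\<le>\<^sub>0"
      using not_nonpos_1m[OF ee_ne1[of s u]] assms by (simp add: ee_def)
  qed
  then show ?thesis by (simp add: phi_def ee_def)
qed

lemma q_pos: "q n > 0"
  using q_ge[of n] ln_gt_zero[of "2::real"] by linarith

lemma phi_q_holo: "(\<lambda>s. phi s (q n)) holomorphic_on S" if "S \<subseteq> {s. Re s > 0}"
  using phi_holo[OF q_pos[of n]] that by (rule holomorphic_on_subset)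

lemma Re_cball: assumes "y \<in> cball x d" shows "Re y \<ge> Re x - d" "norm y \<le> norm x + d"
proof -
  have "dist x y \<le> d" using assms by simp
  then have "norm (x - y) \<le> d" by (simp add: dist_norm)
  then show "Re y \<ge> Re x - d" using abs_Re_le_cmod[of "x - y"] by auto
  show "norm y \<le> norm x + d" using \<open>norm (x - y) \<le> d\<close> norm_triangle_ineq2[of y x]
    by (simp add: norm_minus_commute)
qed

lemma summable_Suc_powr: "a > 1 \<Longrightarrow> summable (\<lambda>n. real (Suc n) powr (- a))"
  using summable_Suc_iff[of "\<lambda>n. real n powr (- a)"] summable_real_powr_iff[of "- a"] by simp

lemma cball_hp:
  assumes "Re x > c" "y \<in> cball x ((Re x - c) / 2)"
  shows "Re y \<ge> c + (Re x - c) / 2" "Re y > c"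
proof -
  have "Re y \<ge> Re x - (Re x - c) / 2" by (rule Re_cball(1)[OF assms(2)])
  then show "Re y \<ge> c + (Re x - c) / 2" by argo
  then show "Re y > c" using assms(1) by argo
qed

lemma cball_hp_sub: "Re x > c \<Longrightarrow> cball x ((Re x - c) / 2) \<subseteq> {s. Re s > c}"
  using cball_hp(2) by blast

definition A :: "complex \<Rightarrow> complex" where "A s = (\<Sum>n. phi s (q n))"
definition Ak :: "nat \<Rightarrow> complex \<Rightarrow> complex" where "Ak k s = (\<Sum>j. phi s (q (j * k)))"
definition bterm :: "nat \<Rightarrow> complex \<Rightarrow> nat \<Rightarrow> complex" where
  "bterm k s j = phi s (q (j * k)) - (1 / of_nat k) * (\<Sum>r<k. phi s (q (j * k + r)))"
definition Bk :: "nat \<Rightarrow> complex \<Rightarrow> complex" where "Bk k s = (\<Sum>j. bterm k s j)"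

lemma phi_k_small:
  assumes "Re s \<ge> a" "a > 1" "k > 0"
  shows "norm (phi s (q (j * k))) \<le> 2 * real (Suc j) powr (- a)"
proof -
  have "norm (phi s (q (j * k))) \<le> 2 * real (Suc (j * k)) powr (- a)"
    by (rule phi_small) (use assms in auto)
  also have "\<dots> \<le> 2 * real (Suc j) powr (- a)"
  proof -
    have "real j * 1 \<le> real j * real k" using assms by (intro mult_left_mono) auto
    then show ?thesis using assms by (intro mult_left_mono powr_mono2') auto
  qed
  finally show ?thesis .
qed

lemma Ak_loc:
  assumes "k > 0" "x \<in> {s. Re s > 1}"
  shows "\<exists>d>0. cball x d \<subseteq> {s. Re s > 1} \<and> (\<exists>M. summable M \<and> (\<forall>n. \<forall>y\<in>cball x d. norm (phi y (q (n * k))) \<le> M n))"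
proof -
  define d where "d = (Re x - 1) / 2"
  have d0: "d > 0" using assms by (simp add: d_def)
  have sub: "cball x d \<subseteq> {s. Re s > 1}"
    using cball_hp_sub[of 1 x] assms by (simp add: d_def)
  have sm: "summable (\<lambda>n. 2 * real (Suc n) powr (- (1 + d)))"
    using summable_Suc_powr[of "1 + d"] d0 by simp
  have bd: "\<forall>n. \<forall>y\<in>cball x d. norm (phi y (q (n * k))) \<le> 2 * real (Suc n) powr (- (1 + d))"
  proof (intro allI ballI)
    fix n y assume "y \<in> cball x d"
    then have "Re y \<ge> 1 + d" using cball_hp(1)[of 1 x y] assms by (simp add: d_def)
    then show "norm (phi y (q (n * k))) \<le> 2 * real (Suc n) powr (- (1 + d))"
      using phi_k_small[of "1 + d" y k n] d0 assms by simp
  qed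
  show ?thesis by (intro exI[of _ d] conjI exI[of _ "\<lambda>n. 2 * real (Suc n) powr (- (1 + d))"] d0 sub sm bd)
qed

lemma Ak_holo: "k > 0 \<Longrightarrow> Ak k holomorphic_on {s. Re s > 1}"
  unfolding Ak_def[abs_def]
  by (rule holo_series[OF open_halfspace_Re_gt]) (auto intro!: phi_q_holo Ak_loc)

lemma Ak_sums: "k > 0 \<Longrightarrow> Re s > 1 \<Longrightarrow> (\<lambda>j. phi s (q (j * k))) sums Ak k s"
  unfolding Ak_def using series_summable_loc[of s "{s. Re s > 1}" "\<lambda>n s. phi s (q (n * k))"] Ak_loc
  by (simp add: summable_sums)

lemma Ak_abs: "k > 0 \<Longrightarrow> Re s > 1 \<Longrightarrow> summable (\<lambda>j. norm (phi s (q (j * k))))"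
  by (rule summable_comparison_test'[OF summable_mult[OF summable_Suc_powr[of "Re s"]], of 0 _ 2])
     (use phi_k_small[of "Re s" s k] in auto)

lemma A_eq: "A = Ak 1"
  by (simp add: A_def[abs_def] Ak_def[abs_def])



lemma bterm_eq:
  assumes "k > 0"
  shows "bterm k s j = (1 / of_nat k) * (\<Sum>r<k. phi s (q (j * k)) - phi s (q (j * k + r)))"
proof -
  have "(\<Sum>r<k. phi s (q (j * k)) - phi s (q (j * k + r))) = of_nat k * phi s (q (j * k)) - (\<Sum>r<k. phi s (q (j * k + r)))"
    by (simp add: sum_subtractf)
  then show ?thesis using assms by (simp add: bterm_def field_simps)
qed

lemma bterm_bound:
  assumes "k > 0" "Re s \<ge> a" "a \<ge> 1/2" "norm s \<le> R"
  shows "norm (bterm k s j) \<le> 4 * R / a * (exp (- a * q (j * k)) - exp (- a * q (j * k + k)))"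
proof -
  let ?E = "\<lambda>n. exp (- a * q n)"
  have a0: "a > 0" using assms by simp
  have "norm (bterm k s j) = (1 / real k) * norm (\<Sum>r<k. phi s (q (j * k)) - phi s (q (j * k + r)))"
    using assms by (simp add: bterm_eq norm_mult norm_divide)
  also have "\<dots> \<le> (1 / real k) * (\<Sum>r<k. norm (phi s (q (j * k)) - phi s (q (j * k + r))))"
    by (intro mult_left_mono norm_sum) auto
  also have "\<dots> \<le> (1 / real k) * (\<Sum>r<k. 4 * R / a * (?E (j * k) - ?E (j * k + k)))"
  proof (intro mult_left_mono sum_mono)
    fix r assume r: "r \<in> {..<k}"
    have "norm (phi s (q (j * k)) - phi s (q (j * k + r))) = norm (phi s (q (j * k + r)) - phi s (q (j * k)))"
      by (rule norm_minus_commute)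
    also have "\<dots> \<le> 4 * R / a * (?E (j * k) - ?E (j * k + r))"
      by (rule phi_diff) (use assms q_ge q_mono in auto)
    also have "\<dots> \<le> 4 * R / a * (?E (j * k) - ?E (j * k + k))"
    proof (rule mult_left_mono)
      have "q (j * k + r) \<le> q (j * k + k)" using r by (intro q_mono) auto
      then have "a * q (j * k + r) \<le> a * q (j * k + k)" using a0 by (intro mult_left_mono) auto
      then show "?E (j * k) - ?E (j * k + r) \<le> ?E (j * k) - ?E (j * k + k)" by simp
      have R0: "0 \<le> R" using assms(4) norm_ge_zero[of s] by linarith
      then show "0 \<le> 4 * R / a" using a0 by simp
    qed
    finally show "norm (phi s (q (j * k)) - phi s (q (j * k + r))) \<le> 4 * R / a * (?E (j * k) - ?E (j * k + k))" .
  qed auto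
  also have "\<dots> = 4 * R / a * (?E (j * k) - ?E (j * k + k))"
    using assms by simp
  finally show ?thesis .
qed

lemma E_tel:
  assumes "k > 0" "a > 0"
  shows "summable (\<lambda>j. exp (- a * q (j * k)) - exp (- a * q (j * k + k)))"
proof -
  have sm: "strict_mono (\<lambda>j::nat. j * k)" using assms by (intro strict_monoI) simp
  have "((\<lambda>n. exp (- a * q n)) \<circ> (\<lambda>j. j * k)) \<longlonglongrightarrow> 0"
    by (rule LIMSEQ_subseq_LIMSEQ[OF exp_q_lim[OF assms(2)] sm])
  then have "(\<lambda>j. exp (- a * q (j * k))) \<longlonglongrightarrow> 0" by (simp add: o_def)
  from telescope_sums'[OF this] show ?thesis
    by (simp add: sums_summable add.commute)
qed

lemma Bk_loc:
  assumes "k > 0" "x \<in> {s. Re s > 1/2}"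
  shows "\<exists>d>0. cball x d \<subseteq> {s. Re s > 1/2} \<and> (\<exists>M. summable M \<and> (\<forall>n. \<forall>y\<in>cball x d. norm (bterm k y n) \<le> M n))"
proof -
  define d where "d = (Re x - 1/2) / 2"
  define a where "a = 1/2 + d"
  define R where "R = norm x + d"
  have d0: "d > 0" using assms by (simp add: d_def)
  have sub: "cball x d \<subseteq> {s. Re s > 1/2}"
    using cball_hp_sub[of "1/2" x] assms by (simp add: d_def)
  have sm: "summable (\<lambda>j. 4 * R / a * (exp (- a * q (j * k)) - exp (- a * q (j * k + k))))"
    using E_tel[of k a] assms d0 by (intro summable_mult) (simp add: a_def)
  have bd: "\<forall>n. \<forall>y\<in>cball x d. norm (bterm k y n) \<le> 4 * R / a * (exp (- a * q (n * k)) - exp (- a * q (n * k + k)))"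
  proof (intro allI ballI)
    fix n y assume y: "y \<in> cball x d"
    then have "Re y \<ge> a" using cball_hp(1)[of "1/2" x y] assms by (simp add: d_def a_def)
    moreover have "norm y \<le> R" using Re_cball(2)[OF y] by (simp add: R_def)
    ultimately show "norm (bterm k y n) \<le> 4 * R / a * (exp (- a * q (n * k)) - exp (- a * q (n * k + k)))"
      using bterm_bound[of k a y R n] d0 assms by (simp add: a_def)
  qed
  show ?thesis by (intro exI[of _ d] conjI exI[of _ "\<lambda>j. 4 * R / a * (exp (- a * q (j * k)) - exp (- a * q (j * k + k)))"] d0 sub sm bd)
qed


lemma Bk_holo: assumes "k > 0" shows "Bk k holomorphic_on {s. Re s > 1/2}"
  unfolding Bk_def[abs_def]
proof (rule holo_series[OF open_halfspace_Re_gt])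
  show "(\<lambda>s. bterm k s n) holomorphic_on {s. 1/2 < Re s}" for n
    unfolding bterm_def
    by (intro holomorphic_intros holomorphic_on_sum phi_q_holo) auto
qed (use Bk_loc assms in auto)

lemma Bk_rel:
  assumes "k > 0" "Re s > 1"
  shows "Ak k s = A s / of_nat k + Bk k s"
proof -
  have "(\<lambda>n. phi s (q n)) sums A s" using Ak_sums[of 1 s] assms by (simp add: A_eq)
  from sums_group[OF this assms(1)]
  have g: "(\<lambda>j. \<Sum>r<k. phi s (q (j * k + r))) sums A s"
  proof -
    have "sum (\<lambda>n. phi s (q n)) {j * k..<j * k + k} = (\<Sum>r<k. phi s (q (j * k + r)))" for j
      using sum.shift_bounds_nat_ivl[of "\<lambda>n. phi s (q n)" 0 "j * k" k]
      by (simp add: add.commute lessThan_atLeast0)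
    then show "(\<lambda>j. sum (\<lambda>n. phi s (q n)) {j * k..<j * k + k}) sums A s \<Longrightarrow> ?thesis" by simp
  qed
  have "(\<lambda>j. bterm k s j) sums (Ak k s - (1 / of_nat k) * A s)"
    unfolding bterm_def by (intro sums_diff sums_mult Ak_sums g assms)
  then have "Bk k s = Ak k s - (1 / of_nat k) * A s"
    unfolding Bk_def by (rule sums_unique[symmetric])
  then show ?thesis by simp
qed



definition pa :: "complex \<Rightarrow> nat \<Rightarrow> complex" where "pa s n = of_nat n powr (- s)"

lemma pa_mult: "pa s (m * n) = pa s m * pa s n"
  unfolding pa_def of_nat_mult by (rule powr_times_real) auto

lemma pa_norm: "norm (pa s n) = real n powr (- Re s)"
  unfolding pa_def by (subst norm_powr_real_powr) auto

lemma pa_1: "pa s 1 = 1" by (simp add: pa_def)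

lemma pa_abs_summable: "Re s > 1 \<Longrightarrow> summable (\<lambda>n. norm (pa s n))"
  unfolding pa_norm using summable_real_powr_iff[of "- Re s"] by simp

lemma pa_abs_summable_on: "Re s > 1 \<Longrightarrow> (\<lambda>n. norm (pa s n)) summable_on X"
proof -
  assume "Re s > 1"
  then have "summable (\<lambda>n. norm (norm (pa s n)))" using pa_abs_summable by simp
  then have "((\<lambda>n. norm (pa s n)) has_sum (\<Sum>n. norm (pa s n))) UNIV"
    by (rule norm_summable_imp_has_sum) (use pa_abs_summable[OF \<open>Re s > 1\<close>] in \<open>simp add: summable_sums\<close>)
  then show ?thesis by (rule summable_on_subset_banach[OF has_sum_imp_summable]) simp
qed

lemma pa_summable_on: "Re s > 1 \<Longrightarrow> pa s summable_on X"
  by (rule abs_summable_summable) (use pa_abs_summable_on in simp)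

definition TT :: "nat \<Rightarrow> nat set" where
  "TT m = {n. n > 0 \<and> (\<forall>j<m. \<not> nth_prime j dvd n)}"

lemma TT_img_sub: "(\<lambda>n. nth_prime m * n) ` TT m \<subseteq> TT m"
proof
  fix x assume "x \<in> (\<lambda>n. nth_prime m * n) ` TT m"
  then obtain n where n: "n \<in> TT m" "x = nth_prime m * n" by auto
  have "\<not> nth_prime j dvd x" if "j < m" for j
  proof
    assume "nth_prime j dvd x"
    then have "nth_prime j dvd nth_prime m \<or> nth_prime j dvd n"
      using n(2) np_prime[of j] prime_dvd_mult_iff by blast
    moreover have "\<not> nth_prime j dvd nth_prime m"
    proof
      assume "nth_prime j dvd nth_prime m"
      then have "nth_prime j = nth_prime m" using np_prime primes_dvd_imp_eq by blast
      then show False using that np_inj by simp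
    qed
    ultimately show False using n(1) that by (auto simp: TT_def)
  qed
  then show "x \<in> TT m" using n np_pos[of m] by (auto simp: TT_def)
qed

lemma TT_Suc: "TT (Suc m) = TT m - (\<lambda>n. nth_prime m * n) ` TT m"
proof (intro equalityI subsetI)
  fix x assume x: "x \<in> TT (Suc m)"
  then have "x \<in> TT m" by (auto simp: TT_def)
  moreover have "x \<notin> (\<lambda>n. nth_prime m * n) ` TT m"
    using x by (auto simp: TT_def)
  ultimately show "x \<in> TT m - (\<lambda>n. nth_prime m * n) ` TT m" by blast
next
  fix x assume x: "x \<in> TT m - (\<lambda>n. nth_prime m * n) ` TT m"
  have "\<not> nth_prime m dvd x"
  proof
    assume "nth_prime m dvd x"
    then obtain n where n: "x = nth_prime m * n" by blast
    have "n \<in> TT m"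
      using x n by (auto simp: TT_def intro: dvd_mult2)
    then show False using x n by blast
  qed
  then show "x \<in> TT (Suc m)" using x by (auto simp: TT_def less_Suc_eq)
qed

lemma TT_has_sum:
  assumes "Re s > 1" "(pa s has_sum Z) (TT 0)"
  shows "(pa s has_sum ((\<Prod>j<m. (1 - pa s (nth_prime j))) * Z)) (TT m)"
proof (induction m)
  case 0 then show ?case using assms by simp
next
  case (Suc m)
  let ?p = "nth_prime m"
  let ?X = "(\<Prod>j<m. (1 - pa s (nth_prime j))) * Z"
  have inj: "inj_on (\<lambda>n. ?p * n) (TT m)" using np_pos[of m] by (auto intro: inj_onI)
  have "((\<lambda>n. pa s ?p * pa s n) has_sum pa s ?p * ?X) (TT m)"
    by (rule has_sum_cmult_right[OF Suc.IH])
  then have "(pa s \<circ> (\<lambda>n. ?p * n) has_sum pa s ?p * ?X) (TT m)"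
    by (simp add: o_def pa_mult)
  then have img: "(pa s has_sum pa s ?p * ?X) ((\<lambda>n. ?p * n) ` TT m)"
    using has_sum_reindex[OF inj, of "pa s"] by blast
  have "(pa s has_sum ?X - pa s ?p * ?X) (TT m - (\<lambda>n. ?p * n) ` TT m)"
    by (rule has_sum_Diff[OF Suc.IH img TT_img_sub])
  then show ?case by (simp add: TT_Suc algebra_simps)
qed

lemma TT_ge: assumes "n \<in> TT m" "n \<noteq> 1" shows "n \<ge> m"
proof -
  obtain p where p: "prime p" "p dvd n" using prime_factor_nat[OF assms(2)] by blast
  obtain j where j: "p = nth_prime j" using prime_is_np[OF p(1)] by blast
  have "\<not> j < m" using assms(1) p(2) j by (auto simp: TT_def)
  then have "nth_prime m \<le> p" using j np_le_iff by simp
  moreover have "p \<le> n" using p(2) assms(1) by (intro dvd_imp_le) (auto simp: TT_def)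
  moreover have "m \<le> nth_prime m" using np_ge[of m] by simp
  ultimately show ?thesis by simp
qed

lemma tail_lim:
  fixes r :: "nat \<Rightarrow> real"
  assumes "summable r" "\<And>n. r n \<ge> 0"
  shows "(\<lambda>m. suminf r - (\<Sum>n<m. r n)) \<longlonglongrightarrow> 0"
      "(r has_sum (suminf r - (\<Sum>n<m. r n))) {n. n \<ge> m}"
proof -
  show "(\<lambda>m. suminf r - (\<Sum>n<m. r n)) \<longlonglongrightarrow> 0"
    using tendsto_diff[OF tendsto_const[of "suminf r"] summable_LIMSEQ[OF assms(1)]] by simp
  have "(r has_sum suminf r) UNIV"
    by (rule norm_summable_imp_has_sum) (use assms in \<open>simp_all add: summable_sums\<close>)
  moreover have "(r has_sum (\<Sum>n<m. r n)) {..<m}" by (rule has_sum_finite) simp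
  ultimately have "(r has_sum (suminf r - (\<Sum>n<m. r n))) (UNIV - {..<m})"
    by (intro has_sum_Diff) auto
  moreover have "UNIV - {..<m} = {n. n \<ge> m}" by auto
  ultimately show "(r has_sum (suminf r - (\<Sum>n<m. r n))) {n. n \<ge> m}" by simp
qed

lemma euler_aux:
  assumes "Re s > 1" "(pa s has_sum Z) (TT 0)"
  shows "Z = exp (A s)"
proof -
  define S where "S m = (\<Prod>j<m. (1 - pa s (nth_prime j))) * Z" for m
  define r where "r = (\<lambda>n. norm (pa s n))"
  have rs: "summable r" "\<And>n. r n \<ge> 0" using pa_abs_summable[OF assms(1)] by (auto simp: r_def)
  have S1: "S \<longlonglongrightarrow> 1"
  proof (rule LIM_zero_cancel, rule Lim_null_comparison[OF _ tail_lim(1)[OF rs]])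
    show "\<forall>\<^sub>F m in sequentially. norm (S m - 1) \<le> suminf r - (\<Sum>n<m. r n)"
    proof (intro always_eventually allI)
      fix m
      have h1: "(pa s has_sum S m) (TT m)" unfolding S_def by (rule TT_has_sum[OF assms])
      have nd: "\<not> nth_prime j dvd 1" for j using np_ge[of j] by simp
      have one: "1 \<in> TT m" using nd by (simp add: TT_def)
      have "(pa s has_sum (sum (pa s) {1})) {1}" by (rule has_sum_finite) simp
      then have h2: "(pa s has_sum 1) {1}" by (simp add: pa_def)
      have h3: "(pa s has_sum (S m - 1)) (TT m - {1})"
        by (rule has_sum_Diff[OF h1 h2]) (use one in auto)
      have sr: "r summable_on X" for X unfolding r_def using pa_abs_summable_on[OF assms(1)] by simp
      have h4: "(r has_sum infsum r (TT m - {1})) (TT m - {1})" using sr by (rule has_sum_infsum)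
      have "norm (S m - 1) \<le> infsum r (TT m - {1})"
        by (rule norm_infsum_le[OF h3 h4]) (simp add: r_def)
      also have "\<dots> \<le> infsum r {n. n \<ge> m}"
        by (rule infsum_mono_neutral[OF sr sr]) (use TT_ge rs(2) in auto)
      also have "\<dots> = suminf r - (\<Sum>n<m. r n)"
        using tail_lim(2)[OF rs, of m] by (simp add: infsumI)
      finally show "norm (S m - 1) \<le> suminf r - (\<Sum>n<m. r n)" .
    qed
  qed
  have prod_eq: "(\<Prod>j<m. (1 - pa s (nth_prime j))) = exp (- (\<Sum>j<m. phi s (q j)))" for m
  proof -
    have "1 - pa s (nth_prime j) = exp (- phi s (q j))" for j
    proof -
      have "norm (ee s (q j)) < 1" using assms q_pos[of j] by (intro ee_ne1) auto
      then have "1 - ee s (q j) \<noteq> 0" by auto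
      then show ?thesis by (simp add: phi_def ee_q pa_def)
    qed
    then show ?thesis by (simp add: exp_sum[symmetric] sum_negf[symmetric])
  qed
  have "(\<lambda>n. phi s (q n)) sums A s" using Ak_sums[of 1 s] assms by (simp add: A_eq)
  then have "(\<lambda>m. \<Sum>j<m. phi s (q j)) \<longlonglongrightarrow> A s" by (simp add: sums_def)
  then have "(\<lambda>m. exp (- (\<Sum>j<m. phi s (q j)))) \<longlonglongrightarrow> exp (- A s)"
    by (rule tendsto_exp[OF tendsto_minus])
  then have lim2: "(\<lambda>m. exp (- (\<Sum>j<m. phi s (q j))) * Z) \<longlonglongrightarrow> exp (- A s) * Z"
    by (rule tendsto_mult_right)
  have "S = (\<lambda>m. exp (- (\<Sum>j<m. phi s (q j))) * Z)" by (simp add: S_def prod_eq fun_eq_iff)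
  with lim2 have "S \<longlonglongrightarrow> exp (- A s) * Z" by simp
  with S1 have "exp (- A s) * Z = 1" using LIMSEQ_unique by blast
  then show ?thesis by (simp add: exp_minus field_simps)
qed

lemma euler:
  assumes "Re s > 1"
  shows "(\<lambda>n. 1 / of_nat (Suc n) powr s) sums exp (A s)"
proof -
  have eq: "pa s (Suc n) = 1 / of_nat (Suc n) powr s" for n
    by (simp add: pa_def powr_minus divide_inverse)
  have sm: "summable (\<lambda>n. norm (pa s (Suc n)))"
    using pa_abs_summable[OF assms] summable_Suc_iff[of "\<lambda>n. norm (pa s n)"] by simp
  have "(pa s \<circ> Suc) sums (\<Sum>n. pa s (Suc n))"
    using summable_norm_cancel[OF sm] by (simp add: o_def summable_sums)
  then have "((pa s \<circ> Suc) has_sum (\<Sum>n. pa s (Suc n))) UNIV"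
    by (intro norm_summable_imp_has_sum) (use sm in \<open>simp_all add: o_def\<close>)
  then have "(pa s has_sum (\<Sum>n. pa s (Suc n))) (Suc ` UNIV)"
    by (subst has_sum_reindex) auto
  moreover have "Suc ` UNIV = TT 0" by (auto simp: TT_def image_iff gr0_conv_Suc)
  ultimately have "(\<Sum>n. pa s (Suc n)) = exp (A s)" using euler_aux[OF assms] by simp
  moreover have "summable (\<lambda>n. pa s (Suc n))" using summable_norm_cancel[OF sm] .
  ultimately have "(\<lambda>n. pa s (Suc n)) sums exp (A s)" using summable_sums by metis
  then show ?thesis by (simp only: eq)
qed



lemma zeta_k_exp:
  assumes "k > 0" "Re s > 1"
  shows "zeta_k k s = exp (Ak k s)"
proof -
  have t: "inverse (1 - of_nat (nth_prime (j * k)) powr (- s)) = exp (phi s (q (j * k)))" for j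
  proof -
    have "norm (ee s (q (j * k))) < 1" using assms q_pos by (intro ee_ne1) auto
    then have "1 - ee s (q (j * k)) \<noteq> 0" by auto
    then show ?thesis by (simp add: phi_def ee_q exp_minus)
  qed
  have "raw_has_prod (\<lambda>j. exp (phi s (q (j * k)))) 0 (exp (Ak k s))"
    by (rule sums_imp_has_prod_exp[OF Ak_sums[OF assms]])
  then have "(\<lambda>j. exp (phi s (q (j * k)))) has_prod exp (Ak k s)"
    by (simp add: has_prod_def)
  then have "exp (Ak k s) = (\<Prod>j. exp (phi s (q (j * k))))" by (rule has_prod_unique)
  then show ?thesis by (simp add: zeta_k_def t)
qed

lemma seg_eq: "complex_of_real ` {1/2..1} = \<real> \<inter> {z. Re z \<ge> 1/2} \<inter> {z. Re z \<le> 1}"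
proof (intro equalityI subsetI)
  fix z assume "z \<in> \<real> \<inter> {z. Re z \<ge> 1/2} \<inter> {z. Re z \<le> 1}"
  then show "z \<in> complex_of_real ` {1/2..1}"
    by (auto simp: image_iff elim!: Reals_cases)
qed auto

lemma Omega_alt: "Omega_half = {z. Re z > 1/2} - (\<real> \<inter> {z. Re z \<ge> 1/2} \<inter> {z. Re z \<le> 1})"
  unfolding Omega_half_def seg_eq ..

lemma open_Omega: "open Omega_half"
  unfolding Omega_alt
  by (intro open_Diff open_halfspace_Re_gt closed_Int closed_complex_Reals closed_halfspace_Re_ge closed_halfspace_Re_le)

lemma Re_gt1_sub: "{s. Re s > 1} \<subseteq> Omega_half"
  unfolding Omega_alt by auto

lemma Omega_sub: "Omega_half \<subseteq> {s. Re s > 1/2} - {1}"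
  unfolding Omega_alt by (auto simp: complex_eq_iff)

lemma two_Omega: "2 \<in> Omega_half" using Re_gt1_sub by auto

lemma starlike_Omega: "starlike Omega_half"
  unfolding starlike_def
proof (intro bexI[of _ 2] ballI subsetI)
  fix x y assume x: "x \<in> Omega_half" and y: "y \<in> closed_segment 2 x"
  from y obtain t where t: "0 \<le> t" "t \<le> 1" "y = (1 - t) *\<^sub>R 2 + t *\<^sub>R x"
    by (auto simp: closed_segment_def)
  have xr: "Re x > 1/2" "x \<in> \<real> \<Longrightarrow> Re x > 1" using x unfolding Omega_alt by auto
  have Rey: "Re y = (1 - t) * 2 + t * Re x" "Im y = t * Im x" using t(3) by simp_all
  have "Re y > 1/2"
  proof (cases "t = 1")
    case True then show ?thesis using Rey xr by simp
  next
    case False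
    have "t * (Re x - 1/2) \<ge> 0" using t xr by simp
    moreover have "(1 - t) * (3/2) > 0" using t False by simp
    ultimately show ?thesis using Rey by (simp add: algebra_simps)
  qed
  moreover have "\<not> (y \<in> \<real> \<and> Re y \<le> 1)"
  proof
    assume yr: "y \<in> \<real> \<and> Re y \<le> 1"
    then have "Im y = 0" by (simp add: complex_is_Real_iff)
    then have "t = 0 \<or> Im x = 0" using Rey by simp
    then show False
    proof
      assume "t = 0" then show False using yr Rey by simp
    next
      assume "Im x = 0"
      then have "Re x > 1" using xr(2) by (simp add: complex_is_Real_iff)
      have "Re y > 1"
      proof (cases "t = 1")
        case True then show ?thesis using Rey \<open>Re x > 1\<close> by simp
      next
        case False
        have "t * (Re x - 1) \<ge> 0" using t \<open>Re x > 1\<close> by simp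
        moreover have "(1 - t) * 1 > 0" using t False by simp
        ultimately show ?thesis using Rey by (simp add: algebra_simps)
      qed
      then show False using yr by simp
    qed
  qed
  ultimately show "y \<in> Omega_half" unfolding Omega_alt by auto
qed (use two_Omega in auto)

lemma connected_Omega: "connected Omega_half"
  by (rule starlike_imp_connected[OF starlike_Omega])



lemma A_holo: "A holomorphic_on {s. Re s > 1}"
  using Ak_holo[of 1] by (simp add: A_eq)

lemma zeta_exp_A: "Re s > 1 \<Longrightarrow> (\<Sum>n. 1 / of_nat (Suc n) powr s) = exp (A s)"
  using euler sums_unique by metis

lemma forward:
  assumes RH and k: "k \<ge> 1"
  shows "has_analytic_cont (zeta_k k) Omega_half"
proof -
  obtain f where fh: "f holomorphic_on ({s. Re s > 1/2} - {1})"
    and fe: "\<And>s. Re s > 1 \<Longrightarrow> f s = (\<Sum>n. 1 / of_nat (Suc n) powr s)"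
    and fnz: "\<And>s. Re s > 1/2 \<Longrightarrow> s \<noteq> 1 \<Longrightarrow> f s \<noteq> 0"
    using assms(1) unfolding RH_def by blast
  have hol: "f holomorphic_on Omega_half" by (rule holomorphic_on_subset[OF fh Omega_sub])
  have nz: "\<And>z. z \<in> Omega_half \<Longrightarrow> f z \<noteq> 0" using Omega_sub fnz by blast
  obtain L where L: "L holomorphic_on Omega_half" "\<And>z. z \<in> Omega_half \<Longrightarrow> f z = exp (L z)"
    using contractible_imp_holomorphic_log[OF hol starlike_imp_contractible[OF starlike_Omega] nz] by blast
  define H where "H = {s. Re s > 1}"
  have HO: "H \<subseteq> Omega_half" using Re_gt1_sub by (simp add: H_def)
  have eqexp: "exp (L s) = exp (A s)" if "s \<in> H" for s
    using L(2)[of s] HO that fe[of s] zeta_exp_A[of s] by (auto simp: H_def)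
  have cont: "continuous_on H (\<lambda>s. L s - A s)"
  proof (intro continuous_intros)
    show "continuous_on H L" using holomorphic_on_imp_continuous_on[OF holomorphic_on_subset[OF L(1) HO]] .
    show "continuous_on H A" using holomorphic_on_imp_continuous_on[OF A_holo] by (simp add: H_def)
  qed
  have disc: "\<exists>n::int. L s - A s = 2 * of_real pi * of_int n * \<i>" if "s \<in> H" for s
  proof -
    from eqexp[OF that] obtain n :: int where "L s = A s + complex_of_real (real_of_int (2 * n) * pi) * \<i>"
      unfolding exp_eq by blast
    then show ?thesis by (intro exI[of _ n]) simp
  qed
  have "(\<lambda>s. L s - A s) constant_on H"
  proof (rule continuous_discrete_range_constant[OF _ cont])
    show "connected H" unfolding H_def by (rule convex_connected[OF convex_halfspace_Re_gt])
  next
    fix x assume x: "x \<in> H"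
    obtain nx :: int where nx: "L x - A x = 2 * of_real pi * of_int nx * \<i>" using disc[OF x] by blast
    show "\<exists>e>0. \<forall>y. y \<in> H \<and> L y - A y \<noteq> L x - A x \<longrightarrow> e \<le> norm ((L y - A y) - (L x - A x))"
    proof (intro exI[of _ "2 * pi"] conjI allI impI)
      fix y assume y: "y \<in> H \<and> L y - A y \<noteq> L x - A x"
      obtain ny :: int where ny: "L y - A y = 2 * of_real pi * of_int ny * \<i>" using disc y by blast
      have "ny \<noteq> nx" using y nx ny by auto
      then have "1 \<le> \<bar>real_of_int (ny - nx)\<bar>" by linarith
      have "norm ((L y - A y) - (L x - A x)) = norm (2 * of_real pi * of_int (ny - nx) * \<i> :: complex)"
        using nx ny by (simp add: algebra_simps)
      also have "\<dots> = 2 * pi * \<bar>real_of_int (ny - nx)\<bar>" by (simp only: norm_mult norm_of_int norm_of_real norm_numeral norm_ii) simp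
      also have "\<dots> \<ge> 2 * pi * 1" using \<open>1 \<le> \<bar>real_of_int (ny - nx)\<bar>\<close> by (intro mult_left_mono) auto
      finally show "2 * pi \<le> norm ((L y - A y) - (L x - A x))" by simp
    qed simp
  qed
  then obtain c where c: "\<And>s. s \<in> H \<Longrightarrow> L s - A s = c" unfolding constant_on_def by blast
  define g where "g s = exp ((L s - c) / of_nat k + Bk k s)" for s
  have "g holomorphic_on Omega_half"
  proof -
    have k0: "k > 0" using k by simp
    have sub: "Omega_half \<subseteq> {s. Re s > 1/2}" using Omega_sub by blast
    have "Bk k holomorphic_on Omega_half"
      by (rule holomorphic_on_subset[OF Bk_holo[OF k0] sub])
    then show ?thesis unfolding g_def using L(1) k by (intro holomorphic_intros) auto
  qed
  then have "g analytic_on Omega_half" using open_Omega by (simp add: analytic_on_open)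
  moreover have "g s = zeta_k k s" if "Re s > 1" for s
  proof -
    have "L s - c = A s" using c[of s] that by (simp add: H_def algebra_simps)
    then have "g s = exp (A s / of_nat k + Bk k s)" by (simp add: g_def)
    also have "\<dots> = exp (Ak k s)" using Bk_rel[of k s] k that by simp
    also have "\<dots> = zeta_k k s" using zeta_k_exp[of k s] k that by simp
    finally show ?thesis .
  qed
  ultimately show ?thesis unfolding has_analytic_cont_def by blast
qed



definition cpw :: "complex \<Rightarrow> real \<Rightarrow> complex" where
  "cpw s y = exp (- s * of_real (ln y))"

lemma norm_cpw: "y > 0 \<Longrightarrow> norm (cpw s y) = exp (- Re s * ln y)"
  by (simp add: cpw_def norm_exp_eq_Re)

lemma pa_cpw: "n > 0 \<Longrightarrow> pa s n = cpw s (real n)"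
  by (simp add: pa_def cpw_def powr_def)

lemma cpw_deriv:
  assumes "y > 0"
  shows "(cpw s has_vector_derivative (- s * cpw s y / of_real y)) (at y)"
proof -
  have nn: "complex_of_real y \<notin> \<real>\<^sub>\<le>\<^sub>0" using assms by (auto simp: nonpos_Reals_def)
  have "((\<lambda>z. exp (- s * Ln z)) has_field_derivative (exp (- s * Ln (of_real y)) * (- s * inverse (of_real y)))) (at (of_real y))"
    by (rule derivative_eq_intros refl nn | simp)+
  then have "((\<lambda>z. exp (- s * Ln z)) has_field_derivative (- s * cpw s y / of_real y)) (at (of_real y))"
    using assms by (simp add: cpw_def Ln_of_real divide_inverse mult_ac)
  from field_vector_diff_chain_at[OF has_vector_derivative_of_real[OF DERIV_ident] this]
  have "((\<lambda>z. exp (- s * Ln z)) \<circ> (\<lambda>y. complex_of_real y) has_vector_derivative - s * cpw s y / of_real y) (at y)"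
    by simp
  then show ?thesis
    by (rule has_vector_derivative_transform_within_open[of _ _ _ "{0<..}"]) (use assms in \<open>auto simp: cpw_def Ln_of_real\<close>)
qed

lemma cpw_shift: assumes "x > 0" shows "cpw (s - 1) x = cpw s x * of_real x"
proof -
  have e: "- (s - 1) * of_real (ln x) = - s * of_real (ln x) + of_real (ln x)" by (simp add: algebra_simps)
  have "exp (complex_of_real (ln x)) = of_real x" using assms by (simp add: exp_of_real)
  then show ?thesis unfolding cpw_def e exp_add by simp
qed

lemma step1:
  assumes "Re s \<ge> a" "a > 0" "1 \<le> n" "n \<le> x"
  shows "norm (cpw s x - cpw s n) \<le> norm s * exp (- a * ln n) / n * (x - n)"
proof -
  let ?C = "norm s * exp (- a * ln n) / n"
  have "norm (cpw s x - cpw s n) \<le> ?C * x - ?C * n"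
  proof (rule gmvt[OF assms(4), where f' = "\<lambda>y. - s * cpw s y / of_real y" and g' = "\<lambda>_. ?C"])
    fix y assume y: "y \<in> {n..x}"
    then have y0: "y > 0" "y \<ge> n" using assms by auto
    show "(cpw s has_vector_derivative - s * cpw s y / of_real y) (at y within {n..x})"
      using cpw_deriv[OF y0(1)] by (rule has_vector_derivative_at_within)
    show "((\<lambda>x. ?C * x) has_real_derivative ?C) (at y within {n..x})"
      using DERIV_cmult[OF DERIV_ident, of ?C] by simp
    have "exp (- Re s * ln y) \<le> exp (- a * ln n)"
    proof -
      have "ln n \<le> ln y" using y0 assms by simp
      moreover have "0 \<le> ln n" using assms by simp
      ultimately have "a * ln n \<le> Re s * ln y" using assms by (intro mult_mono) auto
      then show ?thesis by simp
    qed
    moreover have "1 / y \<le> 1 / n" using y0 assms by (intro divide_left_mono) auto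
    ultimately have "exp (- Re s * ln y) * (1 / y) \<le> exp (- a * ln n) * (1 / n)"
      using y0 by (intro mult_mono) auto
    then have "norm s * (exp (- Re s * ln y) * (1 / y)) \<le> norm s * (exp (- a * ln n) * (1 / n))"
      by (intro mult_left_mono) auto
    then show "norm (- s * cpw s y / of_real y) \<le> ?C"
      using y0 by (simp add: norm_mult norm_divide norm_cpw)
  qed
  moreover have "?C * x - ?C * n = ?C * (x - n)" by (rule right_diff_distrib[symmetric])
  ultimately show ?thesis by simp
qed

lemma ofreal_vd: "(complex_of_real has_vector_derivative 1) (at x)"
  using has_vector_derivative_of_real[OF DERIV_ident, of "at x"] by (simp add: o_def)

lemma step2:
  assumes "s \<noteq> 1" "Re s \<ge> a" "a > 0" "1 \<le> n"
  shows "norm ((cpw (s - 1) (n + 1) - cpw (s - 1) n) / (1 - s) - cpw s n) \<le> norm s * exp (- a * ln n) / n / 2"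
proof -
  let ?C = "norm s * exp (- a * ln n) / n"
  define h where "h x = cpw (s - 1) x / (1 - s) - of_real x * cpw s n" for x
  have s1: "1 - s \<noteq> 0" using assms by simp
  have "norm (h (n + 1) - h n) \<le> ?C * ((n + 1) - n)^2 / 2 - ?C * (n - n)^2 / 2"
  proof (rule gmvt[where f' = "\<lambda>x. cpw s x - cpw s n" and g' = "\<lambda>x. ?C * (x - n)"])
    fix x assume x: "x \<in> {n..n+1}"
    then have x0: "x > 0" "x \<ge> n" using assms by auto
    have "(h has_vector_derivative (- (s - 1) * cpw (s - 1) x / of_real x) / (1 - s) - 1 * cpw s n) (at x)"
      unfolding h_def
      by (intro derivative_intros cpw_deriv x0) (rule ofreal_vd)
    moreover have "(- (s - 1) * cpw (s - 1) x / of_real x) / (1 - s) - 1 * cpw s n = cpw s x - cpw s n"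
      using s1 x0 by (simp add: cpw_shift field_simps)
    ultimately show "(h has_vector_derivative cpw s x - cpw s n) (at x within {n..n+1})"
      by (simp add: has_vector_derivative_at_within)
    show "((\<lambda>x. ?C * (x - n)^2 / 2) has_real_derivative ?C * (x - n)) (at x within {n..n+1})"
      by (rule derivative_eq_intros refl | (insert assms(4), simp add: field_simps))+
    show "norm (cpw s x - cpw s n) \<le> ?C * (x - n)"
      by (rule step1) (use assms x0 in auto)
  qed simp
  moreover have "h (n + 1) - h n = (cpw (s - 1) (n + 1) - cpw (s - 1) n) / (1 - s) - cpw s n"
    by (simp add: h_def algebra_simps diff_divide_distrib)
  ultimately show ?thesis by simp
qed



definition tt :: "complex \<Rightarrow> nat \<Rightarrow> complex" where
  "tt s m = pa s (Suc m) - (pa (s - 1) (Suc m) - pa (s - 1) (Suc (Suc m))) / (s - 1)"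

definition FF :: "complex \<Rightarrow> complex" where
  "FF s = 1 / (s - 1) + (\<Sum>m. tt s m)"

lemma tt_bound:
  assumes "s \<noteq> 1" "Re s \<ge> a" "a > 0" "norm s \<le> R"
  shows "norm (tt s m) \<le> R / 2 * real (Suc m) powr (- (a + 1))"
proof -
  define n where "n = real (Suc m)"
  have n1: "n \<ge> 1" by (simp add: n_def)
  have s1: "s - 1 \<noteq> 0" "1 - s \<noteq> 0" using assms by auto
  have "tt s m = - ((cpw (s - 1) (n + 1) - cpw (s - 1) n) / (1 - s) - cpw s n)"
  proof -
    have "pa s (Suc m) = cpw s n" "pa (s - 1) (Suc m) = cpw (s - 1) n" "pa (s - 1) (Suc (Suc m)) = cpw (s - 1) (n + 1)"
      by (simp_all add: pa_cpw n_def)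
    then show ?thesis unfolding tt_def using s1 by (simp add: field_simps)
  qed
  then have "norm (tt s m) = norm ((cpw (s - 1) (n + 1) - cpw (s - 1) n) / (1 - s) - cpw s n)"
    by (simp only: norm_minus_cancel)
  also have "\<dots> \<le> norm s * exp (- a * ln n) / n / 2" by (rule step2) (use assms n1 in auto)
  also have "\<dots> \<le> R * exp (- a * ln n) / n / 2"
    using assms n1 by (intro divide_right_mono mult_right_mono) auto
  also have "\<dots> = R / 2 * n powr (- (a + 1))"
  proof -
    have "n powr (- (a + 1)) = exp (- a * ln n) / n"
      using n1 by (simp add: powr_def exp_diff algebra_simps exp_minus field_simps)
    then show ?thesis by simp
  qed
  finally show ?thesis by (simp add: n_def)
qed

lemma pa_exp: "n > 0 \<Longrightarrow> pa s n = exp (- s * of_real (ln (real n)))"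
  by (simp add: pa_def powr_def)

definition UU :: "complex set" where "UU = {s. Re s > 1/2} - {1}"

lemma open_UU: "open UU"
  unfolding UU_def by (intro open_Diff open_halfspace_Re_gt) auto

lemma tt_holo: "(\<lambda>s. tt s m) holomorphic_on UU"
proof -
  have eq: "(\<lambda>s. tt s m) = (\<lambda>s. exp (- s * of_real (ln (real (Suc m)))) -
      (exp (- (s - 1) * of_real (ln (real (Suc m)))) - exp (- (s - 1) * of_real (ln (real (Suc (Suc m)))))) / (s - 1))"
    by (simp only: tt_def pa_exp zero_less_Suc)
  show ?thesis unfolding eq by (intro holomorphic_intros) (auto simp: UU_def)
qed

lemma UU_loc:
  assumes "x \<in> UU"
  shows "\<exists>d>0. cball x d \<subseteq> UU \<and> (\<exists>M. summable M \<and> (\<forall>n. \<forall>y\<in>cball x d. norm (tt y n) \<le> M n))"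
proof -
  define d where "d = min ((Re x - 1/2) / 2) (norm (x - 1) / 2)"
  define R where "R = norm x + d"
  have x: "Re x > 1/2" "x \<noteq> 1" using assms by (auto simp: UU_def)
  have d0: "d > 0" using x by (simp add: d_def)
  have yU: "y \<in> UU" and yR: "Re y \<ge> 1/2" "norm y \<le> R" if y: "y \<in> cball x d" for y
  proof -
    have "Re y \<ge> Re x - d" "norm y \<le> norm x + d" using Re_cball[OF y] by auto
    moreover have "d \<le> (Re x - 1/2) / 2" unfolding d_def by (rule min.cobounded1)
    ultimately have Re: "Re y > 1/2" using x by argo
    have "y \<noteq> 1"
    proof
      assume "y = 1"
      then have "norm (x - 1) \<le> d" using y by (simp add: dist_norm)
      moreover have "d \<le> norm (x - 1) / 2" unfolding d_def by (rule min.cobounded2)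
      moreover have "norm (x - 1) > 0" using x by simp
      ultimately show False by argo
    qed
    then show "y \<in> UU" using Re by (simp add: UU_def)
    show "Re y \<ge> 1/2" using Re by simp
    show "norm y \<le> R" using \<open>norm y \<le> norm x + d\<close> by (simp add: R_def)
  qed
  have sub: "cball x d \<subseteq> UU" using yU by blast
  have sm: "summable (\<lambda>n. R / 2 * real (Suc n) powr (- (1/2 + 1)))"
    by (intro summable_mult summable_Suc_powr) simp
  have bd: "\<forall>n. \<forall>y\<in>cball x d. norm (tt y n) \<le> R / 2 * real (Suc n) powr (- (1/2 + 1))"
  proof (intro allI ballI)
    fix n y assume y: "y \<in> cball x d"
    have "y \<noteq> 1" using yU[OF y] by (simp add: UU_def)
    then show "norm (tt y n) \<le> R / 2 * real (Suc n) powr (- (1/2 + 1))"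
      using tt_bound[of y "1/2" R n] yR[OF y] by simp
  qed
  show ?thesis by (intro exI[of _ d] conjI exI[of _ "\<lambda>n. R / 2 * real (Suc n) powr (- (1/2 + 1))"] d0 sub sm bd)
qed

lemma FF_holo: "FF holomorphic_on UU"
proof -
  have "(\<lambda>s. \<Sum>m. tt s m) holomorphic_on UU"
    by (rule holo_series[OF open_UU tt_holo UU_loc])
  then show ?thesis unfolding FF_def[abs_def]
    by (intro holomorphic_intros) (auto simp: UU_def)
qed

lemma tt_sums: "s \<in> UU \<Longrightarrow> tt s sums (\<Sum>m. tt s m)"
  using series_summable_loc[of s UU "\<lambda>m s. tt s m"] UU_loc by (simp add: summable_sums)

lemma FF_eq:
  assumes "Re s > 1"
  shows "FF s = (\<Sum>n. 1 / of_nat (Suc n) powr s)"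
proof -
  let ?Z = "\<Sum>n. 1 / of_nat (Suc n) powr s"
  have z: "(\<lambda>n. pa s (Suc n)) sums ?Z"
  proof -
    have "(\<lambda>n. 1 / of_nat (Suc n) powr s) sums ?Z" using euler[OF assms] sums_unique by metis
    moreover have "pa s (Suc n) = 1 / of_nat (Suc n) powr s" for n
      by (simp add: pa_def powr_minus divide_inverse)
    ultimately show ?thesis by simp
  qed
  have lim: "(\<lambda>m. pa (s - 1) (Suc m)) \<longlonglongrightarrow> 0"
  proof (rule tendsto_norm_zero_cancel)
    have "(\<lambda>m. real (Suc m) powr (- (Re s - 1))) \<longlonglongrightarrow> 0"
      using LIMSEQ_Suc[OF tendsto_neg_powr[OF _ filterlim_real_sequentially, of "- (Re s - 1)"]] assms by simp
    then show "(\<lambda>m. norm (pa (s - 1) (Suc m))) \<longlonglongrightarrow> 0" by (simp add: pa_norm)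
  qed
  have tel: "(\<lambda>m. pa (s - 1) (Suc m) - pa (s - 1) (Suc (Suc m))) sums 1"
    using telescope_sums'[OF lim] by (simp add: pa_def)
  have "tt s sums (?Z - 1 / (s - 1))"
    unfolding tt_def[abs_def] using sums_diff[OF z sums_divide[OF tel, of "s - 1"]] by simp
  then have "(\<Sum>m. tt s m) = ?Z - 1 / (s - 1)" by (rule sums_unique[symmetric])
  then show ?thesis by (simp add: FF_def)
qed



lemma mvt_pow:
  fixes N b :: real
  assumes "N > 0" "0 < b" "b < 1"
  shows "(N + 1) powr (1 - b) - N powr (1 - b) \<ge> (1 - b) * (N + 1) powr (- b)"
proof -
  have "\<exists>z>N. z < N + 1 \<and> (N + 1) powr (1 - b) - N powr (1 - b) = (N + 1 - N) * ((1 - b) * z powr (- b))"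
  proof (rule MVT2[where f = "\<lambda>x. x powr (1 - b)" and f' = "\<lambda>x. (1 - b) * x powr (- b)"])
    fix x assume "N \<le> x" "x \<le> N + 1"
    then have "x > 0" using assms by simp
    then show "((\<lambda>x. x powr (1 - b)) has_real_derivative (1 - b) * x powr (- b)) (at x)"
      using has_real_derivative_powr[of x "1 - b"] by simp
  qed simp
  then obtain z where z: "z > N" "z < N + 1" "(N + 1) powr (1 - b) - N powr (1 - b) = (1 - b) * z powr (- b)"
    by auto
  have "(N + 1) powr (- b) \<le> z powr (- b)" using z assms by (intro powr_mono2') auto
  then show ?thesis using z assms by (simp add: mult_left_mono)
qed

lemma pa_real: "k > 0 \<Longrightarrow> pa (complex_of_real b) k = complex_of_real (real k powr (- b))"
  unfolding pa_def by (subst powr_of_real[symmetric]) auto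

lemma FF_real_neg:
  fixes b :: real
  assumes "1/2 < b" "b < 1"
  shows "Re (FF (complex_of_real b)) < 0"
proof -
  let ?s = "complex_of_real b"
  define tau where "tau m = real (Suc m) powr (- b) - (real (Suc m) powr (- (b - 1)) - real (Suc (Suc m)) powr (- (b - 1))) / (b - 1)" for m
  have tt_re: "Re (tt ?s m) = tau m" for m
  proof -
    have "?s - 1 = complex_of_real (b - 1)" by simp
    then have "tt ?s m = complex_of_real (tau m)"
      unfolding tt_def tau_def by (simp only: pa_real zero_less_Suc) simp
    then show ?thesis by simp
  qed
  have tau_le: "tau m \<le> real (Suc m) powr (- b) - real (Suc (Suc m)) powr (- b)" for m
  proof -
    define N where "N = real (Suc m)"
    have N0: "N > 0" by (simp add: N_def)
    have "(N + 1) powr (1 - b) - N powr (1 - b) \<ge> (1 - b) * (N + 1) powr (- b)"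
      by (rule mvt_pow) (use N0 assms in auto)
    then have "((N + 1) powr (1 - b) - N powr (1 - b)) / (1 - b) \<ge> (N + 1) powr (- b)"
      using assms by (simp add: field_simps)
    moreover have "tau m = N powr (- b) - ((N + 1) powr (1 - b) - N powr (1 - b)) / (1 - b)"
    proof -
      have "b - 1 \<noteq> 0" using assms by simp
      then show ?thesis unfolding tau_def N_def by (simp add: field_simps add.commute)
    qed
    ultimately show ?thesis by (simp add: N_def add.commute)
  qed
  have sU: "?s \<in> UU" using assms by (auto simp: UU_def complex_eq_iff)
  have s1: "tau sums Re (\<Sum>m. tt ?s m)"
    using sums_Re[OF tt_sums[OF sU]] by (simp add: tt_re)
  have lim: "(\<lambda>m. real (Suc m) powr (- b)) \<longlonglongrightarrow> 0"
    using LIMSEQ_Suc[OF tendsto_neg_powr[OF _ filterlim_real_sequentially, of "- b"]] assms by simp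
  have s2: "(\<lambda>m. real (Suc m) powr (- b) - real (Suc (Suc m)) powr (- b)) sums 1"
    using telescope_sums'[OF lim] by simp
  have le1: "Re (\<Sum>m. tt ?s m) \<le> 1"
    by (rule sums_le[OF _ s1 s2]) (use tau_le in auto)
  have "Re (1 / (?s - 1)) = 1 / (b - 1)"
  proof -
    have "1 / (?s - 1) = complex_of_real (1 / (b - 1))" by simp
    then show ?thesis by simp
  qed
  then have "Re (FF ?s) = 1 / (b - 1) + Re (\<Sum>m. tt ?s m)" by (simp add: FF_def)
  also have "\<dots> \<le> 1 / (b - 1) + 1" using le1 by simp
  also have "\<dots> < 0"
  proof -
    have "b - 1 < 0" using assms by simp
    then have "1 / (b - 1) + 1 = b / (b - 1)" by (simp add: field_simps)
    moreover have "b / (b - 1) < 0" using assms by (intro divide_pos_neg) auto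
    ultimately show ?thesis by simp
  qed
  finally show ?thesis .
qed



lemma Omega_UU: "Omega_half \<subseteq> UU"
  using Omega_sub by (simp add: UU_def)

lemma FF_an: "FF analytic_on Omega_half"
  using holomorphic_on_subset[OF FF_holo Omega_UU] open_Omega by (simp add: analytic_on_open)

lemma Bk_an: "k > 0 \<Longrightarrow> Bk k analytic_on Omega_half"
proof -
  assume k: "k > 0"
  have sub: "Omega_half \<subseteq> {s. Re s > 1/2}" using Omega_sub by blast
  show ?thesis using holomorphic_on_subset[OF Bk_holo[OF k] sub] open_Omega by (simp add: analytic_on_open)
qed

lemma FF_exp: "Re s > 1 \<Longrightarrow> FF s = exp (A s)"
  using FF_eq zeta_exp_A by simp

lemma FF_two: "FF 2 \<noteq> 0"
  using FF_exp[of 2] by simp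

lemma FF_not_ev0:
  assumes "\<rho> \<in> Omega_half"
  shows "eventually (\<lambda>z. FF z \<noteq> 0) (at \<rho>)"
proof (rule ccontr)
  assume "\<not> eventually (\<lambda>z. FF z \<noteq> 0) (at \<rho>)"
  then have fr: "frequently (\<lambda>z. FF z = 0) (at \<rho>)" by (simp add: not_eventually)
  have "FF nicely_meromorphic_on Omega_half"
    by (rule analytic_on_imp_nicely_meromorphic_on[OF FF_an])
  then have "FF 2 = 0"
    using frequently_eq_meromorphic_imp_constant[OF fr _ open_Omega connected_Omega assms two_Omega] by blast
  then show False using FF_two by simp
qed

lemma key_identity:
  assumes k: "k > 0" and g: "g meromorphic_on Omega_half" "\<And>s. Re s > 1 \<Longrightarrow> g s = zeta_k k s"
    and \<rho>: "\<rho> \<in> Omega_half"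
  shows "eventually (\<lambda>z. g z ^ k = FF z * exp (of_nat k * Bk k z)) (at \<rho>)"
proof -
  define h where "h z = g z ^ k - FF z * exp (of_nat k * Bk k z)" for z
  have FFm: "FF meromorphic_on Omega_half" by (rule analytic_on_imp_meromorphic_on[OF FF_an])
  have Em: "(\<lambda>z. exp (of_nat k * Bk k z)) meromorphic_on Omega_half"
    by (rule analytic_on_imp_meromorphic_on) (use Bk_an[OF k] in \<open>intro analytic_intros\<close>)
  have hm: "h meromorphic_on Omega_half"
    unfolding h_def by (intro meromorphic_intros g(1) FFm Em)
  have h0: "h s = 0" if "Re s > 1" for s
  proof -
    have "g s ^ k = exp (Ak k s) ^ k" using g(2)[OF that] zeta_k_exp[OF k that] by simp
    also have "\<dots> = exp (of_nat k * Ak k s)" by (simp add: exp_of_nat_mult)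
    also have "of_nat k * Ak k s = A s + of_nat k * Bk k s"
      using Bk_rel[OF k that] k by (simp add: field_simps)
    also have "exp (A s + of_nat k * Bk k s) = FF s * exp (of_nat k * Bk k s)"
      using FF_exp[OF that] by (simp add: exp_add)
    finally show ?thesis by (simp add: h_def)
  qed
  have rnm: "remove_sings h nicely_meromorphic_on Omega_half" by (rule remove_sings_nicely_meromorphic[OF hm])
  have iso: "isolated_singularity_at h z" if "z \<in> Omega_half" for z
    using meromorphic_on_isolated_singularity[OF meromorphic_on_subset[OF hm]] that by blast
  have fr2: "frequently (\<lambda>z. remove_sings h z = 0) (at 2)"
  proof (rule eventually_frequently)
    show "at (2::complex) \<noteq> bot" by simp
    have e1: "eventually (\<lambda>z. z \<in> {s. Re s > 1}) (at (2::complex))"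
      by (rule eventually_at_in_open'[OF open_halfspace_Re_gt]) simp
    have e2: "eventually (\<lambda>z. remove_sings h z = h z) (at 2)"
      by (rule eventually_remove_sings_eq_at[OF iso[OF two_Omega]])
    show "eventually (\<lambda>z. remove_sings h z = 0) (at 2)"
      using e1 e2 by eventually_elim (use h0 in auto)
  qed
  have rz: "remove_sings h w = 0" if "w \<in> Omega_half" for w
    using frequently_eq_meromorphic_imp_constant[OF fr2 rnm open_Omega connected_Omega two_Omega that] .
  have e3: "eventually (\<lambda>z. z \<in> Omega_half) (at \<rho>)" by (rule eventually_at_in_open'[OF open_Omega \<rho>])
  have e4: "eventually (\<lambda>z. remove_sings h z = h z) (at \<rho>)"
    by (rule eventually_remove_sings_eq_at[OF iso[OF \<rho>]])
  show ?thesis using e3 e4 by eventually_elim (use rz in \<open>auto simp: h_def\<close>)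
qed



lemma int_mult_contra:
  fixes k :: nat and z m :: int
  assumes "int k * z = m" "0 < m" "m < int k"
  shows False
proof (cases "z \<le> 0")
  case True
  then have "int k * z \<le> 0" by (simp add: mult_nonneg_nonpos)
  then show False using assms by simp
next
  case False
  then have "int k * 1 \<le> int k * z" by (intro mult_left_mono) auto
  then show False using assms by simp
qed

lemma FF_nz_Omega:
  assumes S: "infinite S" "S \<subseteq> {1..}" "\<forall>k\<in>S. has_meromorphic_cont (zeta_k k) Omega_half"
    and \<rho>: "\<rho> \<in> Omega_half"
  shows "FF \<rho> \<noteq> 0"
proof
  assume z: "FF \<rho> = 0"
  have evnz: "eventually (\<lambda>z. FF z \<noteq> 0) (at \<rho>)" by (rule FF_not_ev0[OF \<rho>])
  have nb: "at \<rho> \<noteq> bot" by simp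
  have frnz: "frequently (\<lambda>z. FF z \<noteq> 0) (at \<rho>)" by (rule eventually_frequently[OF nb evnz])
  have FFa: "FF analytic_on {\<rho>}" using analytic_on_subset[OF FF_an] \<rho> by blast
  have mpos: "zorder FF \<rho> > 0" using zorder_pos_iff'[OF FFa frnz] z by simp
  obtain k where k: "k \<in> S" "k > nat (zorder FF \<rho>)"
    using S(1) unfolding infinite_nat_iff_unbounded by blast
  have k0: "k > 0" using k S(2) by auto
  obtain g where g: "g meromorphic_on Omega_half" "\<And>s. Re s > 1 \<Longrightarrow> g s = zeta_k k s"
    using S(3) k(1) unfolding has_meromorphic_cont_def by blast
  define E where "E z = exp (of_nat k * Bk k z)" for z
  have ev: "eventually (\<lambda>z. g z ^ k = FF z * E z) (at \<rho>)"
    unfolding E_def by (rule key_identity[OF k0 g \<rho>])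
  have gm: "g meromorphic_on {\<rho>}" using meromorphic_on_subset[OF g(1)] \<rho> by blast
  have gfr: "frequently (\<lambda>z. g z \<noteq> 0) (at \<rho>)"
  proof (rule ccontr)
    assume "\<not> frequently (\<lambda>z. g z \<noteq> 0) (at \<rho>)"
    then have "eventually (\<lambda>z. g z = 0) (at \<rho>)" by (simp add: not_frequently)
    with ev evnz have "eventually (\<lambda>z. False) (at \<rho>)"
    proof eventually_elim
      case (elim z)
      have "g z ^ k = 0" using elim(3) k0 by simp
      then have "FF z * E z = 0" using elim(1) by simp
      then show False using elim(2) by (simp add: E_def)
    qed
    then show False using nb by (simp add: eventually_False)
  qed
  have Ea: "E analytic_on {\<rho>}"
    unfolding E_def using analytic_on_subset[OF Bk_an[OF k0]] \<rho> by (intro analytic_intros) auto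
  have Em: "E meromorphic_on {\<rho>}" by (rule analytic_on_imp_meromorphic_on[OF Ea])
  have Efr: "frequently (\<lambda>z. E z \<noteq> 0) (at \<rho>)"
    by (rule eventually_frequently[OF nb]) (simp add: E_def)
  have FFm: "FF meromorphic_on {\<rho>}" by (rule analytic_on_imp_meromorphic_on[OF FFa])
  have "zorder (\<lambda>z. g z ^ k) \<rho> = int k * zorder g \<rho>" by (rule zorder_power[OF gm gfr])
  moreover have "zorder (\<lambda>z. g z ^ k) \<rho> = zorder (\<lambda>z. FF z * E z) \<rho>" by (rule zorder_cong[OF ev refl])
  moreover have "zorder (\<lambda>z. FF z * E z) \<rho> = zorder FF \<rho> + zorder E \<rho>"
    by (rule zorder_mult[OF FFm frnz Em Efr])
  moreover have "zorder E \<rho> = 0" by (rule zorder_eq_0I[OF Ea]) (simp add: E_def)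
  ultimately have eq: "int k * zorder g \<rho> = zorder FF \<rho>" by simp
  have "zorder FF \<rho> < int k" using k(2) mpos by linarith
  then show False using int_mult_contra[OF eq mpos] by simp
qed

lemma backward:
  assumes "infinite S" "S \<subseteq> {1..}" "\<forall>k\<in>S. has_meromorphic_cont (zeta_k k) Omega_half"
  shows RH
  unfolding RH_def
proof (intro exI[of _ FF] conjI allI impI)
  show "FF holomorphic_on ({s. Re s > 1/2} - {1})" using FF_holo by (simp add: UU_def)
  show "FF s = (\<Sum>n. 1 / of_nat (Suc n) powr s)" if "Re s > 1" for s using FF_eq[OF that] .
  fix s assume s: "Re s > 1/2 \<and> s \<noteq> 1"
  show "FF s \<noteq> 0"
  proof (cases "s \<in> Omega_half")
    case True then show ?thesis using FF_nz_Omega[OF assms] by blast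
  next
    case False
    then have "s \<in> complex_of_real ` {1/2..1}" using s by (simp add: Omega_half_def)
    then obtain b where b: "s = complex_of_real b" "1/2 \<le> b" "b \<le> 1" by auto
    have "1/2 < b" "b < 1" using b s by auto
    then have "Re (FF s) < 0" using FF_real_neg b(1) by simp
    then show ?thesis by auto
  qed
qed

theorem mainTheorem1:
  shows "(RH \<longleftrightarrow> (\<forall>i\<ge>1. has_meromorphic_cont (zeta_k i) Omega_half))
       \<and> (RH \<longleftrightarrow> (\<forall>i\<ge>1. has_analytic_cont (zeta_k i) Omega_half))
       \<and> (RH \<longleftrightarrow> (\<exists>S. S \<subseteq> {1..} \<and> infinite S \<and>
                      (\<forall>i\<in>S. has_analytic_cont (zeta_k i) Omega_half)))"
proof -
  have an_mero: "has_analytic_cont h X \<Longrightarrow> has_meromorphic_cont h X" for h X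
    unfolding has_analytic_cont_def has_meromorphic_cont_def
    using analytic_on_imp_meromorphic_on by blast
  have inf1: "infinite {1::nat..}" by (simp add: infinite_Ici)
  have b1: "(\<forall>i\<ge>1. has_meromorphic_cont (zeta_k i) Omega_half) \<Longrightarrow> RH"
    by (rule backward[OF inf1]) auto
  have f1: "RH \<Longrightarrow> (\<forall>i\<ge>1. has_analytic_cont (zeta_k i) Omega_half)"
    using forward by blast
  have b3: "(\<exists>S. S \<subseteq> {1..} \<and> infinite S \<and> (\<forall>i\<in>S. has_analytic_cont (zeta_k i) Omega_half)) \<Longrightarrow> RH"
  proof -
    assume "\<exists>S. S \<subseteq> {1..} \<and> infinite S \<and> (\<forall>i\<in>S. has_analytic_cont (zeta_k i) Omega_half)"
    then obtain S where "S \<subseteq> {1..}" "infinite S" "\<forall>i\<in>S. has_analytic_cont (zeta_k i) Omega_half" by blast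
    then show RH using backward[of S] an_mero by blast
  qed
  have f3: "RH \<Longrightarrow> (\<exists>S. S \<subseteq> {1..} \<and> infinite S \<and> (\<forall>i\<in>S. has_analytic_cont (zeta_k i) Omega_half))"
    using f1 inf1 by (intro exI[of _ "{1..}"]) auto
  show ?thesis using b1 f1 b3 f3 an_mero by blast
qed

end
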